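(* Let $\ell\ge 1$ be an integer. In the game $\mathrm{CN}(2\ell+1,\ell+1)$, every position in $$S_1=\Big\{(x,\underbrace{0,\ldots,0}_{\ell-1},x,a_1,\ldots,a_\ell)\ \Big|\ x,a_1,\dots,a_\ell\ge 0 \text{ integers},\ \sum_{i=1}^{\ell}a_i=x\Big\}$$ (up to rotation and reflection) is a $\mathcal P$-position.
   Context: Circular Nim $\mathrm{CN}(n,k)$: $n$ stacks of tokens are arranged in a circle; a position is a vector $(p_1,\dots,p_n)$ of nonnegative integers giving the stack heights in order around the circle, determined only up to rotation and reflection. A move consists of choosing $k$ cyclically consecutive stacks and removing at least one token from at least one of these $k$ stacks (any number from each chosen stack; other stacks unchanged). Under normal play the last player able to move wins. A $\mathcal P$-position is one from which the player about to move loses under optimal play. *)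

theory Defs
  imports Main
begin

text \<open>Positions of Circular Nim CN(n,k): lists of stack heights of length n,
  listed in order around the circle (index j and (j+1) mod n are adjacent).\<close>

definition cn_window :: "nat \<Rightarrow> nat \<Rightarrow> nat \<Rightarrow> nat set" where
  "cn_window n k i = {(i + t) mod n | t. t < k}"

definition cn_move :: "nat \<Rightarrow> nat \<Rightarrow> nat list \<Rightarrow> nat list \<Rightarrow> bool" where
  "cn_move n k p q \<longleftrightarrow> length p = n \<and> length q = n \<and>
     (\<exists>i<n. (\<forall>j<n. j \<notin> cn_window n k i \<longrightarrow> q ! j = p ! j)
           \<and> (\<forall>j<n. q ! j \<le> p ! j) \<and> q \<noteq> p)"

inductive cn_P :: "nat \<Rightarrow> nat \<Rightarrow> nat list \<Rightarrow> bool"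
  and cn_N :: "nat \<Rightarrow> nat \<Rightarrow> nat list \<Rightarrow> bool"
  for n k :: nat where
  P_intro: "(\<And>q. cn_move n k p q \<Longrightarrow> cn_N n k q) \<Longrightarrow> cn_P n k p"
| N_intro: "cn_move n k p q \<Longrightarrow> cn_P n k q \<Longrightarrow> cn_N n k p"

end

theory Submission imports Defs "HOL-Number_Theory.Cong" begin

lemma mod_aux: "(n::nat) > 0 \<Longrightarrow> (n - r mod n + r) mod n = 0"
proof -
  assume "n > 0"
  then have "r mod n < n" by simp
  have "n - r mod n + r = (Suc (r div n)) * n"
  proof -
    have e: "r div n * n + r mod n = r" by (rule div_mult_mod_eq)
    have f: "Suc (r div n) * n = n + r div n * n" by simp
    show ?thesis using e f \<open>r mod n < n\<close> by linarith
  qed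
  then show ?thesis by simp
qed

lemma rot_inv: assumes "length p = n" "n > 0"
  shows "rotate (n - r mod n) (rotate r p) = p" "rotate r (rotate (n - r mod n) p) = p"
proof -
  show "rotate (n - r mod n) (rotate r p) = p"
    using assms mod_aux[OF assms(2), of r]
    by (metis rotate_conv_mod rotate_rotate rotate0 id_apply)
  show "rotate r (rotate (n - r mod n) p) = p"
    using assms mod_aux[OF assms(2), of r]
    by (metis add.commute rotate_conv_mod rotate_rotate rotate0 id_apply)
qed

lemma move_rot:
  assumes "cn_move n k p q" shows "cn_move n k (rotate r p) (rotate r q)"
proof -
  from assms obtain i where i: "i < n" and lp: "length p = n" and lq: "length q = n"
    and out: "\<forall>j<n. j \<notin> cn_window n k i \<longrightarrow> q ! j = p ! j"
    and le: "\<forall>j<n. q ! j \<le> p ! j" and ne: "q \<noteq> p"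
    unfolding cn_move_def by blast
  have n0: "n > 0" using i by simp
  define i' where "i' = (i + (n - r mod n)) mod n"
  have i': "i' < n" using n0 by (simp add: i'_def)
  have key: "j \<in> cn_window n k i'" if j: "j < n" and jw: "(r + j) mod n \<in> cn_window n k i" for j
  proof -
    from jw obtain t where t: "t < k" and e: "(r + j) mod n = (i + t) mod n"
      unfolding cn_window_def by blast
    have "[i' + t + r = i + t + (n - r mod n + r)] (mod n)"
      unfolding i'_def cong_def
      by (metis (no_types, lifting) add.assoc add.commute mod_add_left_eq)
    also have "[i + t + (n - r mod n + r) = i + t + 0] (mod n)"
      using mod_aux[OF n0, of r] unfolding cong_def by (metis mod_add_right_eq add_0_right)
    also have "[i + t + 0 = j + r] (mod n)" using e unfolding cong_def by (simp add: add.commute)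
    finally have "[i' + t = j] (mod n)" using cong_add_rcancel_nat by blast
    then have "j = (i' + t) mod n" using j unfolding cong_def by simp
    then show ?thesis unfolding cn_window_def using t by blast
  qed
  have "rotate r q \<noteq> rotate r p"
  proof
    assume "rotate r q = rotate r p"
    then have "rotate (n - r mod n) (rotate r q) = rotate (n - r mod n) (rotate r p)" by simp
    then show False using rot_inv[OF lp n0] rot_inv[OF lq n0] ne by simp
  qed
  moreover have "\<forall>j<n. j \<notin> cn_window n k i' \<longrightarrow> rotate r q ! j = rotate r p ! j"
  proof (intro allI impI)
    fix j assume j: "j < n" "j \<notin> cn_window n k i'"
    have "(r + j) mod n < n" using n0 by simp
    moreover have "(r + j) mod n \<notin> cn_window n k i" using key j by blast
    ultimately show "rotate r q ! j = rotate r p ! j" using out lp lq j by (simp add: nth_rotate)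
  qed
  moreover have "\<forall>j<n. rotate r q ! j \<le> rotate r p ! j"
    using le lp lq n0 by (simp add: nth_rotate)
  ultimately show ?thesis unfolding cn_move_def using i' lp lq by auto
qed

lemma rot_PN:
  shows "cn_P n k p \<Longrightarrow> \<forall>r. cn_P n k (rotate r p)"
    and "cn_N n k q \<Longrightarrow> \<forall>r. cn_N n k (rotate r q)"
proof (induction rule: cn_P_cn_N.inducts)
  case (P_intro p)
  show ?case
  proof
    fix r
    show "cn_P n k (rotate r p)"
    proof (rule cn_P_cn_N.P_intro)
      fix q assume m: "cn_move n k (rotate r p) q"
      then have lp: "length p = n" and lq: "length q = n" unfolding cn_move_def by auto
      have n0: "n > 0" using m unfolding cn_move_def by auto
      have "cn_move n k (rotate (n - r mod n) (rotate r p)) (rotate (n - r mod n) q)"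
        using move_rot[OF m] .
      then have "cn_move n k p (rotate (n - r mod n) q)" using rot_inv[OF lp n0] by simp
      then have "cn_N n k (rotate r (rotate (n - r mod n) q))" using P_intro by blast
      then show "cn_N n k q" using rot_inv[OF lq n0] by simp
    qed
  qed
next
  case (N_intro p q)
  then show ?case using move_rot cn_P_cn_N.N_intro by blast
qed


definition bs :: "nat \<Rightarrow> nat \<Rightarrow> nat \<Rightarrow> nat list \<Rightarrow> nat list" where
  "bs l a c b = [a] @ replicate (l - 1) 0 @ [c] @ b"

lemma len_bs: "l \<ge> 1 \<Longrightarrow> length (bs l a c b) = l + 1 + length b"
  unfolding bs_def by simp

lemma nth_bs: "l \<ge> 1 \<Longrightarrow> bs l a c b ! j =
   (if j = 0 then a else if j < l then 0 else if j = l then c else b ! (j - l - 1))"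
  unfolding bs_def by (auto simp: nth_append nth_Cons')

lemma bs_eq: "bs l a c b = bs l a' c' b' \<longleftrightarrow> a = a' \<and> c = c' \<and> b = b'"
  unfolding bs_def by simp

lemma win: assumes "l \<ge> 1" "i < 2*l+1" "j < 2*l+1"
  shows "j \<in> cn_window (2*l+1) (l+1) i \<longleftrightarrow>
    (if i \<le> l then i \<le> j \<and> j \<le> i + l else (i \<le> j \<or> j + (2*l+1) \<le> i + l))"
proof
  assume "j \<in> cn_window (2*l+1) (l+1) i"
  then obtain t where t: "t < l+1" and e: "j = (i + t) mod (2*l+1)"
    unfolding cn_window_def by blast
  show "(if i \<le> l then i \<le> j \<and> j \<le> i + l else (i \<le> j \<or> j + (2*l+1) \<le> i + l))"
  proof (cases "i + t < 2*l+1")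
    case True
    then have "j = i + t" using e by simp
    then show ?thesis using t by auto
  next
    case False
    then have "j = i + t - (2*l+1)" using e assms t
      by (simp add: mod_if)
    then show ?thesis using t False by auto
  qed
next
  assume h: "(if i \<le> l then i \<le> j \<and> j \<le> i + l else (i \<le> j \<or> j + (2*l+1) \<le> i + l))"
  show "j \<in> cn_window (2*l+1) (l+1) i"
  proof (cases "i \<le> j")
    case True
    have "j - i < l + 1" using h True assms by (auto split: if_splits)
    moreover have "j = (i + (j - i)) mod (2*l+1)" using True assms by simp
    ultimately show ?thesis unfolding cn_window_def by blast
  next
    case False
    have "j + (2*l+1) - i < l + 1" using h False assms by (auto split: if_splits)
    moreover have "j = (i + (j + (2*l+1) - i)) mod (2*l+1)"
    proof -
      have "i + (j + (2*l+1) - i) = j + (2*l+1)" using False assms by simp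
      then show ?thesis using assms(3) by (metis mod_add_self2 mod_less)
    qed
    ultimately show ?thesis unfolding cn_window_def by blast
  qed
qed

lemma reduce: "m \<le> sum_list (b::nat list) \<Longrightarrow> \<exists>b'. length b' = length b \<and> (\<forall>t<length b. b' ! t \<le> b ! t) \<and> sum_list b' = m"
proof (induction b arbitrary: m)
  case Nil
  then show ?case by simp
next
  case (Cons c b)
  show ?case
  proof (cases "m \<le> sum_list b")
    case True
    then obtain b' where "length b' = length b" "\<forall>t<length b. b' ! t \<le> b ! t" "sum_list b' = m"
      using Cons.IH by blast
    then show ?thesis
      by (intro exI[of _ "0 # b'"]) (auto simp: nth_Cons')
  next
    case False
    then show ?thesis using Cons.prems
      by (intro exI[of _ "(m - sum_list b) # b"]) (auto simp: nth_Cons')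
  qed
qed

lemma move_bs:
  assumes l: "l \<ge> 1" and lb: "length b = l" and lb': "length b' = l"
    and a: "a' \<le> a" and c: "c' \<le> c" and bb: "\<forall>t<l. b' ! t \<le> b ! t"
    and ne: "(a', c', b') \<noteq> (a, c, b)"
    and w: "b' = b \<or> a' = a \<or> c' = c"
  shows "cn_move (2*l+1) (l+1) (bs l a c b) (bs l a' c' b')"
proof -
  let ?n = "2*l+1"
  have le: "\<forall>j<?n. bs l a' c' b' ! j \<le> bs l a c b ! j"
    using a c bb l by (auto simp: nth_bs)
  have ne': "bs l a' c' b' \<noteq> bs l a c b" using ne bs_eq by auto
  have len: "length (bs l a c b) = ?n" "length (bs l a' c' b') = ?n"
    using len_bs[OF l] lb lb' by auto
  obtain i where i: "i < ?n" and out: "\<forall>j<?n. j \<notin> cn_window ?n (l+1) i \<longrightarrow> bs l a' c' b' ! j = bs l a c b ! j"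
  proof (cases "b' = b")
    case True
    show ?thesis
    proof (rule that[of 0])
      show "\<forall>j<?n. j \<notin> cn_window ?n (l+1) 0 \<longrightarrow> bs l a' c' b' ! j = bs l a c b ! j"
      proof (intro allI impI)
        fix j assume j: "j < ?n" "j \<notin> cn_window ?n (l+1) 0"
        then have "l < j" using win[OF l, of 0 j] by auto
        then show "bs l a' c' b' ! j = bs l a c b ! j" using True l by (simp add: nth_bs)
      qed
    qed simp
  next
    case F: False
    show ?thesis
    proof (cases "a' = a")
      case True
      show ?thesis
      proof (rule that[of l])
        show "\<forall>j<?n. j \<notin> cn_window ?n (l+1) l \<longrightarrow> bs l a' c' b' ! j = bs l a c b ! j"
        proof (intro allI impI)
          fix j assume j: "j < ?n" "j \<notin> cn_window ?n (l+1) l"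
          then have "j < l" using win[OF l, of l j] l by auto
          then show "bs l a' c' b' ! j = bs l a c b ! j" using True l by (simp add: nth_bs)
        qed
      qed simp
    next
      case False
      then have "c' = c" using w F by blast
      show ?thesis
      proof (rule that[of "l+1"])
        show "\<forall>j<?n. j \<notin> cn_window ?n (l+1) (l+1) \<longrightarrow> bs l a' c' b' ! j = bs l a c b ! j"
        proof (intro allI impI)
          fix j assume j: "j < ?n" "j \<notin> cn_window ?n (l+1) (l+1)"
          then have "0 < j \<and> j \<le> l" using win[OF l, of "l+1" j] l by auto
          then show "bs l a' c' b' ! j = bs l a c b ! j" using \<open>c' = c\<close> l by (simp add: nth_bs)
        qed
      qed (use l in simp)
    qed
  qed
  show ?thesis unfolding cn_move_def using i out le ne' len by blast
qed


lemma sum_le_eq: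
  fixes a b :: "nat list"
  assumes "length b = length a" "\<forall>t<length a. b ! t \<le> a ! t"
  shows "sum_list b \<le> sum_list a \<and> (sum_list b = sum_list a \<longrightarrow> b = a)"
proof -
  have sb: "sum_list b = (\<Sum>t = 0..<length a. b ! t)" using assms(1) by (simp add: sum_list_sum_nth)
  have sa: "sum_list a = (\<Sum>t = 0..<length a. a ! t)" by (simp add: sum_list_sum_nth)
  have "sum_list b \<le> sum_list a" unfolding sb sa using assms(2) by (intro sum_mono) auto
  moreover have "b = a" if eq: "sum_list b = sum_list a"
  proof (rule ccontr)
    assume "b \<noteq> a"
    then obtain t where t: "t < length a" "b ! t \<noteq> a ! t" using assms(1) nth_equalityI by metis
    then have "b ! t < a ! t" using assms(2) by (simp add: order_less_le)
    then have "(\<Sum>t = 0..<length a. b ! t) < (\<Sum>t = 0..<length a. a ! t)"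
      using assms(2) t by (intro sum_strict_mono_ex1) auto
    then show False using eq sb sa by simp
  qed
  ultimately show ?thesis by blast
qed

lemma base_P:
  assumes l: "l \<ge> 1"
  shows "length as = l \<Longrightarrow> sum_list as = x \<Longrightarrow> cn_P (2*l+1) (l+1) (bs l x x as)"
proof (induction x arbitrary: as rule: less_induct)
  case (less x as)
  let ?n = "2*l+1"
  let ?p = "bs l x x as"
  show ?case
  proof (rule cn_P_cn_N.P_intro)
    fix q assume mv: "cn_move ?n (l+1) ?p q"
    then obtain i where i: "i < ?n" and lq: "length q = ?n"
      and out: "\<forall>j<?n. j \<notin> cn_window ?n (l+1) i \<longrightarrow> q ! j = ?p ! j"
      and le: "\<forall>j<?n. q ! j \<le> ?p ! j" and ne: "q \<noteq> ?p"
      unfolding cn_move_def by blast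
    define y0 where "y0 = q ! 0"
    define yl where "yl = q ! l"
    define b where "b = drop (l+1) q"
    have lb: "length b = l" using lq b_def by simp
    have qeq: "q = bs l y0 yl b"
    proof (rule nth_equalityI)
      show "length q = length (bs l y0 yl b)" using lq lb len_bs[OF l] by simp
      fix j assume j: "j < length q"
      show "q ! j = bs l y0 yl b ! j"
      proof (cases "0 < j \<and> j < l")
        case True
        have "j < ?n" using True by simp
        then have "q ! j \<le> ?p ! j" using le by blast
        then have "q ! j \<le> 0" using True l by (simp add: nth_bs)
        then show ?thesis using True l by (simp add: nth_bs)
      next
        case False
        then show ?thesis using l j lq by (auto simp: nth_bs y0_def yl_def b_def)
      qed
    qed
    have y0le: "y0 \<le> x" using le l unfolding y0_def by (auto simp: nth_bs)
    have ylle: "yl \<le> x"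
    proof -
      have "q ! l \<le> ?p ! l" using le by simp
      then show ?thesis using l unfolding yl_def by (simp add: nth_bs)
    qed
    have bj: "b ! t = q ! (l + 1 + t)" if "t < l" for t using that lq by (simp add: b_def)
    have pj: "?p ! (l + 1 + t) = as ! t" for t using l by (simp add: nth_bs)
    have ble: "\<forall>t<l. b ! t \<le> as ! t"
    proof (intro allI impI)
      fix t assume t: "t < l"
      have "q ! (l+1+t) \<le> ?p ! (l+1+t)" using le t by simp
      then show "b ! t \<le> as ! t" using bj[OF t] pj by simp
    qed
    have disj: "y0 = x \<or> yl = x \<or> b = as"
    proof (rule ccontr)
      assume c: "\<not> (y0 = x \<or> yl = x \<or> b = as)"
      have "0 \<in> cn_window ?n (l+1) i"
      proof (rule ccontr)
        assume "0 \<notin> cn_window ?n (l+1) i"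
        then have "q ! 0 = ?p ! 0" using out by simp
        then show False using c l by (simp add: y0_def nth_bs)
      qed
      then have i1: "i = 0 \<or> l + 1 \<le> i" using win[OF l i, of 0] by (auto split: if_splits)
      have "l \<in> cn_window ?n (l+1) i"
      proof (rule ccontr)
        assume "l \<notin> cn_window ?n (l+1) i"
        then have "q ! l = ?p ! l" using out by simp
        then show False using c l by (simp add: yl_def nth_bs)
      qed
      then have "i \<le> l" using win[OF l i, of l] i by (auto split: if_splits)
      with i1 have i0: "i = 0" by simp
      have "b = as"
      proof (rule nth_equalityI)
        show "length b = length as" using lb less.prems by simp
        fix t assume t: "t < length b"
        have "l + 1 + t \<notin> cn_window ?n (l+1) i" using win[OF l i, of "l+1+t"] i0 t lb by auto
        then have "q ! (l+1+t) = ?p ! (l+1+t)" using out t lb by simp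
        then show "b ! t = as ! t" using bj t lb pj by simp
      qed
      then show False using c by simp
    qed
    have notall: "\<not> (y0 = x \<and> yl = x \<and> b = as)" using ne qeq by auto
    define S where "S = sum_list b"
    have SS: "S \<le> x \<and> (S = x \<longrightarrow> b = as)"
      using sum_le_eq[of b as] lb less.prems ble unfolding S_def by simp
    obtain m b' where mx: "m < x" and lb': "length b' = l" and sb': "sum_list b' = m"
      and mvq: "cn_move ?n (l+1) q (bs l m m b')"
    proof (cases "S \<le> y0 \<and> S \<le> yl")
      case True
      have "S < x" using SS True y0le ylle notall disj by (metis le_antisym le_neq_implies_less)
      have "cn_move ?n (l+1) (bs l y0 yl b) (bs l S S b)"
      proof (rule move_bs[OF l lb lb])
        show "(S, S, b) \<noteq> (y0, yl, b)"
        proof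
          assume "(S, S, b) = (y0, yl, b)"
          then have "y0 = S" "yl = S" by auto
          then have "b = as" using disj \<open>S < x\<close> by auto
          then show False using \<open>S < x\<close> less.prems S_def by simp
        qed
      qed (use True in auto)
      then show ?thesis
        by (intro that[of S b] \<open>S < x\<close> lb) (simp_all add: S_def qeq[symmetric])
    next
      case F: False
      show ?thesis
      proof (cases "y0 < S \<and> y0 \<le> yl")
        case True
        obtain b' where b': "length b' = length b" "\<forall>t<length b. b' ! t \<le> b ! t" "sum_list b' = y0"
          using reduce[of y0 b] True S_def by auto
        have "b' \<noteq> b" using b' True S_def by auto
        have "cn_move ?n (l+1) (bs l y0 yl b) (bs l y0 y0 b')"
          by (rule move_bs[OF l lb]) (use True lb b' \<open>b' \<noteq> b\<close> in simp_all)
        then show ?thesis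
        proof (intro that[of y0 b'])
          show "y0 < x" using True SS by simp
        qed (use lb b' qeq in simp_all)
      next
        case False
        then have T: "yl < S \<and> yl < y0" using F by auto
        obtain b' where b': "length b' = length b" "\<forall>t<length b. b' ! t \<le> b ! t" "sum_list b' = yl"
          using reduce[of yl b] T S_def by auto
        have "b' \<noteq> b" using b' T S_def by auto
        have "cn_move ?n (l+1) (bs l y0 yl b) (bs l yl yl b')"
          by (rule move_bs[OF l lb]) (use T lb b' \<open>b' \<noteq> b\<close> in simp_all)
        then show ?thesis
        proof (intro that[of yl b'])
          show "yl < x" using T SS by simp
        qed (use lb b' qeq in simp_all)
      qed
    qed
    have "cn_P ?n (l+1) (bs l m m b')" using less.IH[OF mx lb' sb'] .
    then show "cn_N ?n (l+1) q" using mvq cn_P_cn_N.N_intro by blast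
  qed
qed

lemma rev_bs: "l \<ge> 1 \<Longrightarrow> length as = l \<Longrightarrow>
  rev ([x] @ replicate (l - 1) 0 @ [x] @ as) = rotate (l+1) (bs l x x (rev as))"
proof -
  assume l: "l \<ge> 1" and la: "length as = l"
  have "bs l x x (rev as) = ([x] @ replicate (l - 1) 0 @ [x]) @ rev as" unfolding bs_def by simp
  moreover have "length ([x] @ replicate (l - 1) 0 @ [x]) = l + 1" using l by simp
  ultimately have "rotate (l+1) (bs l x x (rev as)) = rev as @ [x] @ replicate (l - 1) 0 @ [x]"
    by (metis rotate_append append.assoc)
  then show ?thesis by simp
qed

theorem lemma5:
  fixes l x r :: nat and as p :: "nat list"
  assumes "l \<ge> 1"
    and "length as = l"
    and "sum_list as = x"
    and "p = rotate r ([x] @ replicate (l - 1) 0 @ [x] @ as)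
         \<or> p = rotate r (rev ([x] @ replicate (l - 1) 0 @ [x] @ as))"
  shows "cn_P (2 * l + 1) (l + 1) p"
proof -
  have P0: "cn_P (2*l+1) (l+1) (bs l x x as)" using base_P[OF assms(1) assms(2) assms(3)] .
  have P1: "cn_P (2*l+1) (l+1) (bs l x x (rev as))"
    using base_P[OF assms(1), of "rev as" x] assms(2,3) by simp
  from assms(4) show ?thesis
  proof
    assume "p = rotate r ([x] @ replicate (l - 1) 0 @ [x] @ as)"
    then show ?thesis using rot_PN(1)[OF P0] unfolding bs_def by simp
  next
    assume "p = rotate r (rev ([x] @ replicate (l - 1) 0 @ [x] @ as))"
    then have "p = rotate r (rotate (l+1) (bs l x x (rev as)))"
      using rev_bs[OF assms(1,2)] by metis
    then have "p = rotate (r + (l+1)) (bs l x x (rev as))"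
      by (simp only: rotate_rotate)
    then show ?thesis using rot_PN(1)[OF P1] by (simp only:)
  qed
qed

end
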